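(* Let $n \ge 1$ and $0 \le k < n$. There exists a comparison tournament $G$ on $n$ elements $x_1,\dots,x_n$ with the following property: for every set $S \subseteq \{x_1,\dots,x_n\}$ with $|S| < \min\{n, 2k+1\}$, there exists a choice of exactly $k$ corrupted elements that is valid for $G$ (i.e. $G$ restricted to the remaining $n-k$ uncorrupted elements is acyclic) and whose uncorrupted maximum does not lie in $S$. Consequently, any algorithm that always outputs a set containing the uncorrupted maximum must, on this instance, output a set of size at least $\min\{n, 2k+1\}$.
   Context: Model: there are $n$ elements $x_1,\dots,x_n$, exactly $k$ of which are corrupted (the algorithm does not know which). For every pair of distinct elements $x_u, x_v$ the comparison graph (a tournament) specifies that either $x_u$ is larger than $x_v$ or $x_v$ is larger than $x_u$. The comparison graph restricted to the $n-k$ uncorrupted elements is acyclic (a transitive tournament); comparisons involving corrupted elements may be oriented arbitrarily (possibly creating directed cycles). The uncorrupted maximum is the unique uncorrupted element larger than every other uncorrupted element. An algorithm knows $n$ and $k$, may query the orientation of any pair (a comparison query; answers are determined by the fixed comparison graph), and outputs a set of elements. *)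

theory Defs
  imports Main
begin

text \<open>Elements x_1..x_n are represented by the naturals 0..n-1.
  G u v means "u is larger than v" according to the comparison graph.\<close>

definition tournament :: "nat \<Rightarrow> (nat \<Rightarrow> nat \<Rightarrow> bool) \<Rightarrow> bool" where
  "tournament n G \<longleftrightarrow>
     (\<forall>u<n. \<not> G u u) \<and> (\<forall>u<n. \<forall>v<n. u \<noteq> v \<longrightarrow> (G u v \<longleftrightarrow> \<not> G v u))"

definition uncorrupted :: "nat \<Rightarrow> nat set \<Rightarrow> nat set" where
  "uncorrupted n C = {..<n} - C"

definition valid_corruption :: "nat \<Rightarrow> nat \<Rightarrow> (nat \<Rightarrow> nat \<Rightarrow> bool) \<Rightarrow> nat set \<Rightarrow> bool" where
  "valid_corruption n k G C \<longleftrightarrow>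
     C \<subseteq> {..<n} \<and> card C = k \<and>
     acyclic {(u, v). u \<in> uncorrupted n C \<and> v \<in> uncorrupted n C \<and> G u v}"

definition is_uncorrupted_max :: "nat \<Rightarrow> (nat \<Rightarrow> nat \<Rightarrow> bool) \<Rightarrow> nat set \<Rightarrow> nat \<Rightarrow> bool" where
  "is_uncorrupted_max n G C m \<longleftrightarrow>
     m \<in> uncorrupted n C \<and> (\<forall>v \<in> uncorrupted n C. v \<noteq> m \<longrightarrow> G m v)"

end

theory Submission
  imports Defs
begin

lemma modsmall: "(x::nat) < 2*N \<Longrightarrow> x mod N = (if x < N then x else x - N)"
  by (simp add: le_mod_geq)

lemma off_inv: "(m::nat) < N \<Longrightarrow> j < N \<Longrightarrow> ((m+j) mod N + N - m) mod N = j"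
  by (simp add: modsmall)

lemma off_inv2: "(m::nat) < N \<Longrightarrow> u < N \<Longrightarrow> (m + (u + N - m) mod N) mod N = u"
  by (simp add: modsmall)

lemma off_diff: "(m::nat) < N \<Longrightarrow> a < N \<Longrightarrow> b < N \<Longrightarrow>
   ((m+b) mod N + N - (m+a) mod N) mod N = (b + N - a) mod N"
  by (simp add: modsmall)

lemma sym_d: assumes that: "(i::nat) < N" "j < N" "i \<noteq> j" shows
   "(j + N - i) mod N = N - (i + N - j) mod N"
proof (cases "i < j")
  case True
  then have "(j + N - i) mod N = j - i" "(i + N - j) mod N = N - (j - i)" using that by (simp_all add: modsmall)
  then show ?thesis using True that by simp
next
  case False
  then have "(j + N - i) mod N = N - (i - j)" "(i + N - j) mod N = i - j" using that by (simp_all add: modsmall)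
  then show ?thesis using False that by simp
qed

definition GG :: "nat \<Rightarrow> nat \<Rightarrow> nat \<Rightarrow> nat \<Rightarrow> bool" where
  "GG N k u v \<longleftrightarrow>
     (u < N \<and> v < N \<and> u \<noteq> v \<and>
        ((v + N - u) mod N < N - k \<or> ((v + N - u) mod N \<le> k \<and> u < v)))
   \<or> (u < N \<and> \<not> v < N) \<or> (\<not> u < N \<and> \<not> v < N \<and> v < u)"

lemma tour_aux: "(d::nat) = N - e \<Longrightarrow> e<N \<Longrightarrow> e\<noteq>0 \<Longrightarrow> N \<le> 2*k+1 \<Longrightarrow> (u::nat)\<noteq>v \<Longrightarrow> (d < N-k \<or> (d\<le>k \<and> u<v)) = (\<not>(e<N-k \<or> (e\<le>k \<and> v<u)))"
  by (cases "u < v") auto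

lemma GG_tour: assumes "N \<le> 2*k+1" shows "tournament n (GG N k)"
  unfolding tournament_def
proof (intro conjI allI impI)
  fix u assume "u < n" show "\<not> GG N k u u" by (simp add: GG_def)
next
  fix u v assume "u < n" "v < n" "u \<noteq> v"
  show "GG N k u v = (\<not> GG N k v u)"
  proof (cases "u < N \<and> v < N")
    case True
    define d where "d = (v + N - u) mod N"
    define e where "e = (u + N - v) mod N"
    have 1: "d = N - e" using True \<open>u\<noteq>v\<close> unfolding d_def e_def by (intro sym_d) auto
    have 2: "e < N" using True unfolding e_def by simp
    have "u + N - v < 2*N" using True by linarith
    from modsmall[OF this] have 3: "e \<noteq> 0" using True \<open>u\<noteq>v\<close> unfolding e_def by auto
    have g1: "GG N k u v = (d < N-k \<or> (d\<le>k \<and> u<v))" using True \<open>u\<noteq>v\<close> by (simp add: GG_def d_def)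
    have g2: "GG N k v u = (e < N-k \<or> (e\<le>k \<and> v<u))" using True \<open>u\<noteq>v\<close> by (simp add: GG_def e_def)
    show ?thesis unfolding g1 g2 by (rule tour_aux[OF 1 2 3 assms \<open>u\<noteq>v\<close>])
  next
    case False then show ?thesis using \<open>u\<noteq>v\<close> unfolding GG_def by auto
  qed
qed

lemma key:
  assumes N: "N = min n (2*k+1)" and kn: "k < n" and m: "m < N"
  shows "\<exists>C. valid_corruption n k (GG N k) C \<and> is_uncorrupted_max n (GG N k) C m"
proof -
  define h where "h = (\<lambda>j. (m + j) mod N)"
  define C where "C = h ` {N-k..<N}"
  have kN: "k < N" using N kn by simp
  have Nn: "N \<le> n" using N by simp
  have N2: "N \<le> 2*k+1" using N by simp
  have hoff: "(h j + N - m) mod N = j" if "j < N" for j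
    unfolding h_def by (rule off_inv[OF m that])
  have inj: "inj_on h {..<N}"
  proof (rule inj_onI)
    fix a b assume "a \<in> {..<N}" "b \<in> {..<N}" "h a = h b"
    have ha: "(h a + N - m) mod N = a" using \<open>a \<in> {..<N}\<close> by (intro hoff) simp
    have hb: "(h b + N - m) mod N = b" using \<open>b \<in> {..<N}\<close> by (intro hoff) simp
    show "a = b" using ha hb \<open>h a = h b\<close> by metis
  qed
  have Csub: "C \<subseteq> {..<N}"
  proof
    fix x assume "x \<in> C"
    then obtain j where "x = h j" unfolding C_def by blast
    moreover have "h j < N" unfolding h_def using m by (intro mod_less_divisor) linarith
    ultimately show "x \<in> {..<N}" by simp
  qed
  have "{N-k..<N} \<subseteq> {..<N}" by auto
  then have "card C = card {N-k..<N}" unfolding C_def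
    by (intro card_image inj_on_subset[OF inj])
  then have cardC: "card C = k" using kN by simp
  define R where "R = uncorrupted n C"
  have Rtop: "\<exists>a<N-k. u = h a" if "u \<in> R" "u < N" for u
  proof -
    define a where "a = (u + N - m) mod N"
    have ua: "u = h a" using off_inv2[OF m that(2)] by (simp add: h_def a_def)
    have "a < N" using m by (simp add: a_def)
    moreover have "\<not> a \<ge> N - k"
    proof
      assume "a \<ge> N - k"
      then have "u \<in> C" using \<open>a < N\<close> ua by (auto simp: C_def)
      then show False using that(1) by (simp add: R_def uncorrupted_def)
    qed
    ultimately have "a < N - k" by linarith
    then show ?thesis using ua by blast
  qed
  have mR: "m \<in> R"
  proof -
    have "m \<notin> C"
    proof
      assume "m \<in> C"
      then obtain j where j: "j \<in> {N-k..<N}" "m = h j" by (auto simp: C_def)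
      have "j = 0" using hoff[of j] j m by simp
      then show False using j kN by auto
    qed
    then show ?thesis using m Nn by (simp add: R_def uncorrupted_def)
  qed
  define r where "r = (\<lambda>v. if v < N then n + N - (v + N - m) mod N else v)"
  have edge: "r v < r u" if uR: "u \<in> R" and vR: "v \<in> R" and g: "GG N k u v" for u v
  proof (cases "u < N")
    case uT: True
    show ?thesis
    proof (cases "v < N")
      case vT: True
      obtain a where a: "a < N-k" "u = h a" using Rtop uR uT by blast
      obtain b where b: "b < N-k" "v = h b" using Rtop vR vT by blast
      have d: "(v + N - u) mod N = (b + N - a) mod N"
        using off_diff[OF m, of a b] a b by (simp add: h_def)
      have ou: "(u + N - m) mod N = a" using a hoff[of a] kN by simp
      have ov: "(v + N - m) mod N = b" using b hoff[of b] kN by simp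
      have "a < b"
      proof (rule ccontr)
        assume "\<not> a < b"
        moreover have "u \<noteq> v" using g by (auto simp: GG_def)
        then have "a \<noteq> b" using a b by blast
        ultimately have "b < a" by simp
        then have "(b + N - a) mod N = N - (a - b)" using a by (simp add: modsmall)
        moreover have "(v + N - u) mod N < N - k \<or> ((v + N - u) mod N \<le> k \<and> u < v)"
          using g uT vT unfolding GG_def by blast
        ultimately show False using d a b \<open>b<a\<close> N2 by linarith
      qed
      then show ?thesis using uT vT ou ov a b by (simp add: r_def)
    next
      case False
      have "v < n" using vR by (simp add: R_def uncorrupted_def)
      moreover have "(u + N - m) mod N < N" using uT by simp
      ultimately have "v < n + N - (u + N - m) mod N" by linarith
      then show ?thesis using uT False unfolding r_def by simp
    qed
  next
    case False
    then show ?thesis using g by (auto simp: r_def GG_def)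
  qed
  have acyc: "acyclic {(u, v). u \<in> R \<and> v \<in> R \<and> GG N k u v}"
  proof -
    have "{(u, v). u \<in> R \<and> v \<in> R \<and> GG N k u v}\<inverse> \<subseteq> measure r"
      using edge by auto
    then have "wf ({(u, v). u \<in> R \<and> v \<in> R \<and> GG N k u v}\<inverse>)"
      using wf_subset wf_measure by blast
    then have "acyclic ({(u, v). u \<in> R \<and> v \<in> R \<and> GG N k u v}\<inverse>)" by (rule wf_acyclic)
    then show ?thesis by simp
  qed
  have valid: "valid_corruption n k (GG N k) C"
    unfolding valid_corruption_def using Csub Nn cardC acyc R_def by auto
  have mx: "is_uncorrupted_max n (GG N k) C m"
    unfolding is_uncorrupted_max_def
  proof (intro conjI ballI impI)
    show "m \<in> uncorrupted n C" using mR R_def by simp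
  next
    fix v assume v: "v \<in> uncorrupted n C" "v \<noteq> m"
    show "GG N k m v"
    proof (cases "v < N")
      case True
      obtain b where b: "b < N-k" "v = h b" using Rtop v R_def True by blast
      have "(v + N - m) mod N = b" using b hoff[of b] kN by simp
      then have "(v + N - m) mod N < N - k" using b by simp
      then show ?thesis using True m v(2) unfolding GG_def by blast
    next
      case False then show ?thesis using m by (simp add: GG_def)
    qed
  qed
  show ?thesis using valid mx by blast
qed

theorem mainTheorem1:
  fixes n k :: nat
  assumes "n \<ge> 1" and "k < n"
  shows "\<exists>G. tournament n G \<and>
     (\<forall>S. S \<subseteq> {..<n} \<and> card S < min n (2 * k + 1) \<longrightarrow>
        (\<exists>C m. valid_corruption n k G C \<and> is_uncorrupted_max n G C m \<and> m \<notin> S)) \<and>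
     (\<forall>S. S \<subseteq> {..<n} \<and>
        (\<forall>C m. valid_corruption n k G C \<and> is_uncorrupted_max n G C m \<longrightarrow> m \<in> S) \<longrightarrow>
        card S \<ge> min n (2 * k + 1))"
proof -
  define N where "N = min n (2*k+1)"
  have P2: "\<exists>C m. valid_corruption n k (GG N k) C \<and> is_uncorrupted_max n (GG N k) C m \<and> m \<notin> S"
    if "S \<subseteq> {..<n}" "card S < N" for S
  proof -
    have "\<not> {..<N} \<subseteq> S"
    proof
      assume "{..<N} \<subseteq> S"
      then have "card {..<N} \<le> card S" using that(1) by (intro card_mono) (auto intro: finite_subset)
      then show False using that(2) by simp
    qed
    then obtain m where "m < N" "m \<notin> S" by auto
    then show ?thesis using key[OF N_def assms(2) \<open>m < N\<close>] by blast
  qed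
  show ?thesis
  proof (rule exI[of _ "GG N k"], intro conjI allI impI)
    show "tournament n (GG N k)" by (rule GG_tour) (simp add: N_def)
  next
    fix S assume "S \<subseteq> {..<n} \<and> card S < min n (2 * k + 1)"
    then show "\<exists>C m. valid_corruption n k (GG N k) C \<and> is_uncorrupted_max n (GG N k) C m \<and> m \<notin> S"
      using P2 N_def by blast
  next
    fix S assume H: "S \<subseteq> {..<n} \<and>
        (\<forall>C m. valid_corruption n k (GG N k) C \<and> is_uncorrupted_max n (GG N k) C m \<longrightarrow> m \<in> S)"
    show "card S \<ge> min n (2 * k + 1)"
    proof (rule ccontr)
      assume "\<not> ?thesis"
      then have "card S < min n (2 * k + 1)" by (simp only: not_le)
      then have "card S < N" unfolding N_def .
      then show False using P2 H by blast
    qed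
  qed
qed

end
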